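(* Let $\mathcal I$ be either the $\sigma$-ideal of meager subsets of $\mathbb R$ or the $\sigma$-ideal of Lebesgue null subsets of $\mathbb R$, let $\mathcal A\subseteq\mathcal I$, and let $P\subseteq\mathbb R$ be an uncountable perfect set. Then $P$ is a tiny set with respect to $\mathcal A$ if and only if for every $t\in\mathbb R$ and every $A\in\mathcal A$ we have $|(P+t)\cap A|\le\omega$.
   Context: For a $\sigma$-ideal $\mathcal I$ on $\mathbb R$ and $\mathcal A\subseteq\mathcal I$, an uncountable perfect set $P\subseteq\mathbb R$ is a tiny set with respect to $\mathcal A$ if (1) for every $t\in\mathbb R$ and every $A\in\mathcal A$, $|(P+t)\cap A|\le\omega$, and (2) for every Borel set $B\notin\mathcal I$ there is $t\in\mathbb R$ with $|(P+t)\cap B|=\mathfrak c$, where $\mathfrak c=|\mathbb R|$. *)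

theory Defs
  imports "HOL-Analysis.Analysis"
begin

definition nowhere_dense :: "real set \<Rightarrow> bool" where
  "nowhere_dense S \<longleftrightarrow> interior (closure S) = {}"

definition meager_sets :: "real set set" where
  "meager_sets = {M. \<exists>F::nat \<Rightarrow> real set. (\<forall>n. nowhere_dense (F n)) \<and> M \<subseteq> (\<Union>n. F n)}"

text \<open>Lebesgue null sets (Lebesgue measure is complete, so this contains all subsets of null sets).\<close>
definition null_ideal :: "real set set" where
  "null_ideal = null_sets lebesgue"

definition perfect_set :: "real set \<Rightarrow> bool" where
  "perfect_set P \<longleftrightarrow> closed P \<and> (\<forall>x\<in>P. x islimpt P)"

definition tiny_set :: "real set set \<Rightarrow> real set set \<Rightarrow> real set \<Rightarrow> bool" where
  "tiny_set I \<A> P \<longleftrightarrow>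
     uncountable P \<and> perfect_set P \<and>
     (\<forall>t::real. \<forall>A\<in>\<A>. countable (((\<lambda>x. x + t) ` P) \<inter> A)) \<and>
     (\<forall>B. B \<in> sets borel \<and> B \<notin> I \<longrightarrow>
        (\<exists>t::real. ((\<lambda>x. x + t) ` P) \<inter> B \<approx> (UNIV :: real set)))"

end

theory Submission
  imports Defs
begin


definition sinv :: "real set \<Rightarrow> (nat \<Rightarrow> real set \<Rightarrow> bool) \<Rightarrow> (nat \<Rightarrow> real \<Rightarrow> real \<Rightarrow> real set \<Rightarrow> bool)
   \<Rightarrow> nat \<Rightarrow> real set \<times> (bool list \<Rightarrow> real \<times> real) \<Rightarrow> bool" where
  "sinv P Adm Ok n X \<longleftrightarrow> Adm n (fst X) \<and> (\<forall>s. length s = n \<longrightarrow>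
      fst (snd X s) \<in> P \<and> snd (snd X s) > 0 \<and> Ok n (fst (snd X s)) (snd (snd X s)) (fst X))"

definition sext :: "nat \<Rightarrow> real set \<times> (bool list \<Rightarrow> real \<times> real) \<Rightarrow> real set \<times> (bool list \<Rightarrow> real \<times> real) \<Rightarrow> bool" where
  "sext n X Y \<longleftrightarrow> fst Y \<subseteq> fst X \<and> (\<forall>s. length s = n \<longrightarrow>
     (\<forall>i. cball (fst (snd Y (s@[i]))) (snd (snd Y (s@[i]))) \<subseteq> cball (fst (snd X s)) (snd (snd X s))
          \<and> snd (snd Y (s@[i])) \<le> inverse (real (Suc n))) \<and>
     cball (fst (snd Y (s@[True]))) (snd (snd Y (s@[True]))) \<inter> cball (fst (snd Y (s@[False]))) (snd (snd Y (s@[False]))) = {})"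

lemma scheme_step:
  fixes P :: "real set"
  assumes Plim: "\<And>x. x \<in> P \<Longrightarrow> x islimpt P"
  and Hmono: "\<And>n c r r' T. Ok n c r T \<Longrightarrow> 0 < r' \<Longrightarrow> r' \<le> r \<Longrightarrow> Ok n c r' T"
  and Hstep: "\<And>n T F N. Adm n T \<Longrightarrow> finite F \<Longrightarrow> (\<And>c r. (c,r) \<in> F \<Longrightarrow> c \<in> P \<and> r > 0 \<and> Ok n c r T) \<Longrightarrow>
       \<exists>\<delta>>0. \<forall>Q. finite Q \<and> card Q \<le> N \<and> Q \<subseteq> P \<and> (\<forall>q\<in>Q. \<exists>(c,r)\<in>F. dist q c < \<delta> \<and> dist q c < r) \<longrightarrow>
             (\<exists>T'. T' \<subseteq> T \<and> Adm (Suc n) T' \<and> (\<exists>\<rho>>0. \<forall>q\<in>Q. Ok (Suc n) q \<rho> T'))"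
  and X: "sinv P Adm Ok n X"
  shows "\<exists>Y. sext n X Y \<and> sinv P Adm Ok (Suc n) Y"
proof -
  obtain T C where XTC: "X = (T, C)" by fastforce
  define c where "c = (\<lambda>s. fst (C s))"
  define r where "r = (\<lambda>s. snd (C s))"
  define S where "S = {s::bool list. length s = n}"
  have finS: "finite S" unfolding S_def using finite_lists_length_eq[of "UNIV::bool set" n] by simp
  have Adm: "Adm n T" and cs: "\<And>s. s \<in> S \<Longrightarrow> c s \<in> P \<and> r s > 0 \<and> Ok n (c s) (r s) T"
    using X unfolding sinv_def XTC c_def r_def S_def by auto
  define F where "F = (\<lambda>s. (c s, r s)) ` S"
  have "finite F" using finS F_def by simp
  moreover have "\<And>a b. (a,b) \<in> F \<Longrightarrow> a \<in> P \<and> b > 0 \<and> Ok n a b T" using cs F_def by auto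
  ultimately obtain \<delta> where d0: "\<delta> > 0" and dQ: "\<forall>Q. finite Q \<and> card Q \<le> 2 * card S \<and> Q \<subseteq> P \<and> (\<forall>q\<in>Q. \<exists>(a,b)\<in>F. dist q a < \<delta> \<and> dist q a < b) \<longrightarrow>
             (\<exists>T'. T' \<subseteq> T \<and> Adm (Suc n) T' \<and> (\<exists>\<rho>>0. \<forall>q\<in>Q. Ok (Suc n) q \<rho> T'))"
    using Hstep[OF Adm, of F "2 * card S"] by blast
  have "\<forall>s\<in>S. \<exists>q\<in>P. q \<noteq> c s \<and> dist q (c s) < min \<delta> (r s)"
  proof
    fix s assume "s \<in> S"
    then have "c s islimpt P" "min \<delta> (r s) > 0" using cs Plim d0 by auto
    then show "\<exists>q\<in>P. q \<noteq> c s \<and> dist q (c s) < min \<delta> (r s)"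
      unfolding islimpt_approachable by blast
  qed
  then obtain q where q: "\<And>s. s \<in> S \<Longrightarrow> q s \<in> P \<and> q s \<noteq> c s \<and> dist (q s) (c s) < min \<delta> (r s)"
    by metis
  define Q where "Q = c ` S \<union> q ` S"
  have fQ: "finite Q" using finS Q_def by simp
  have cQ: "card Q \<le> 2 * card S"
  proof -
    have "card Q \<le> card (c ` S) + card (q ` S)" unfolding Q_def by (rule card_Un_le)
    also have "\<dots> \<le> card S + card S" by (intro add_mono card_image_le finS)
    finally show ?thesis by simp
  qed
  have sQ: "Q \<subseteq> P" using q cs Q_def by auto
  have nQ: "\<forall>x\<in>Q. \<exists>(a,b)\<in>F. dist x a < \<delta> \<and> dist x a < b"
  proof
    fix x assume "x \<in> Q"
    then obtain s where s: "s \<in> S" "x = c s \<or> x = q s" unfolding Q_def by auto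
    have "(c s, r s) \<in> F" using s F_def by auto
    moreover have "dist x (c s) < \<delta> \<and> dist x (c s) < r s" using s q[of s] cs[of s] d0 by auto
    ultimately show "\<exists>(a,b)\<in>F. dist x a < \<delta> \<and> dist x a < b" by blast
  qed
  have "\<exists>T'. T' \<subseteq> T \<and> Adm (Suc n) T' \<and> (\<exists>\<rho>>0. \<forall>q\<in>Q. Ok (Suc n) q \<rho> T')"
    by (rule mp[OF spec[OF dQ, of Q]]) (intro conjI fQ cQ sQ nQ)
  then obtain T' \<rho> where T': "T' \<subseteq> T" "Adm (Suc n) T'" "\<rho> > 0" "\<And>x. x \<in> Q \<Longrightarrow> Ok (Suc n) x \<rho> T'"
    by blast
  define d where "d = (\<lambda>s. dist (q s) (c s))"
  define rd where "rd = (\<lambda>s. min (min \<rho> (d s / 3)) (min ((r s - d s) / 2) (inverse (real (Suc n)))))"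
  have dpos: "\<And>s. s \<in> S \<Longrightarrow> d s > 0 \<and> d s < r s" using q unfolding d_def by auto
  have rdpos: "\<And>s. s \<in> S \<Longrightarrow> rd s > 0" using dpos T'(3) unfolding rd_def by auto
  define C' where "C' = (\<lambda>l. if last l then (q (butlast l), rd (butlast l)) else (c (butlast l), rd (butlast l)))"
  have C'T: "\<And>s. C' (s @ [True]) = (q s, rd s)" and C'F: "\<And>s. C' (s @ [False]) = (c s, rd s)"
    unfolding C'_def by auto
  show ?thesis
  proof (intro exI conjI)
    show "sext n X (T', C')"
      unfolding sext_def XTC fst_conv snd_conv
    proof (intro conjI allI impI T'(1))
      fix s :: "bool list" and i assume "length s = n"
      then have s: "s \<in> S" unfolding S_def by auto
      have rd: "rd s \<le> \<rho>" "rd s \<le> d s / 3" "rd s \<le> (r s - d s) / 2" "rd s \<le> inverse (real (Suc n))"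
        unfolding rd_def by arith+
      show "cball (fst (C' (s @ [i]))) (snd (C' (s @ [i]))) \<subseteq> cball (fst (C s)) (snd (C s))"
      proof (cases i)
        case True
        have "cball (q s) (rd s) \<subseteq> cball (c s) (r s)"
        proof (rule subsetI)
          fix y assume "y \<in> cball (q s) (rd s)"
          then have "dist (q s) y \<le> rd s" by simp
          moreover have "dist (c s) y \<le> dist (c s) (q s) + dist (q s) y" by (rule dist_triangle)
          ultimately show "y \<in> cball (c s) (r s)"
            using rd dpos[OF s] unfolding d_def by (simp add: dist_commute)
        qed
        then show ?thesis using True by (simp add: C'T c_def r_def)
      next
        case False
        have "cball (c s) (rd s) \<subseteq> cball (c s) (r s)"
          using rd dpos[OF s] by (intro subset_cball) simp
        then show ?thesis using False by (simp add: C'F c_def r_def)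
      qed
      show "snd (C' (s @ [i])) \<le> inverse (real (Suc n))" using rd by (cases i) (auto simp: C'T C'F)
    next
      fix s :: "bool list" assume "length s = n"
      then have s: "s \<in> S" unfolding S_def by auto
      have rd: "rd s \<le> d s / 3" unfolding rd_def by (simp add: min_le_iff_disj)
      show "cball (fst (C' (s @ [True]))) (snd (C' (s @ [True]))) \<inter> cball (fst (C' (s @ [False]))) (snd (C' (s @ [False]))) = {}"
        unfolding C'T C'F fst_conv snd_conv
      proof (rule ccontr)
        assume "cball (q s) (rd s) \<inter> cball (c s) (rd s) \<noteq> {}"
        then obtain y where "dist (q s) y \<le> rd s" "dist (c s) y \<le> rd s" by auto
        moreover have "dist (q s) (c s) \<le> dist (q s) y + dist (c s) y" by (rule dist_triangle2)
        ultimately show False using rd dpos[OF s] unfolding d_def by simp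
      qed
    qed
    show "sinv P Adm Ok (Suc n) (T', C')"
      unfolding sinv_def fst_conv snd_conv
    proof (intro conjI allI impI T'(2))
      fix l :: "bool list" assume l: "length l = Suc n"
      have "l \<noteq> []" using l by auto
      then have li: "l = butlast l @ [last l]" by simp
      have s: "butlast l \<in> S" using l unfolding S_def by simp
      define i where "i = last l"
      define s where "s = butlast l"
      note li = li[folded i_def s_def] and s = s[folded s_def]
      have rd: "rd s \<le> \<rho>" unfolding rd_def by (simp add: min_le_iff_disj)
      have ctr: "fst (C' l) \<in> Q" using s unfolding li Q_def by (cases i) (auto simp: C'T C'F)
      then have ctr2: "fst (C' l) \<in> P" using sQ by blast
      have rad: "snd (C' l) = rd s" unfolding li by (cases i; simp add: C'T C'F)
      show "fst (C' l) \<in> P" by (rule ctr2)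
      show "0 < snd (C' l)" using rad rdpos[OF s] by simp
      show "Ok (Suc n) (fst (C' l)) (snd (C' l)) T'"
        using Hmono[OF T'(4)[OF ctr], of "rd s"] rad rdpos[OF s] rd by simp
    qed
  qed
qed

lemma scheme:
  fixes P B :: "real set" and Adm :: "nat \<Rightarrow> real set \<Rightarrow> bool" and Ok :: "nat \<Rightarrow> real \<Rightarrow> real \<Rightarrow> real set \<Rightarrow> bool"
  assumes Pcl: "closed P" and Plim: "\<And>x. x \<in> P \<Longrightarrow> x islimpt P" and c0: "c0 \<in> P"
  and H0: "r0 > 0" "Adm 0 T0" "Ok 0 c0 r0 T0"
  and Hcpt: "\<And>n T. Adm n T \<Longrightarrow> compact T \<and> T \<noteq> {}"
  and Hmono: "\<And>n c r r' T. Ok n c r T \<Longrightarrow> 0 < r' \<Longrightarrow> r' \<le> r \<Longrightarrow> Ok n c r' T"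
  and Hstep: "\<And>n T F N. Adm n T \<Longrightarrow> finite F \<Longrightarrow> (\<And>c r. (c,r) \<in> F \<Longrightarrow> c \<in> P \<and> r > 0 \<and> Ok n c r T) \<Longrightarrow>
       \<exists>\<delta>>0. \<forall>Q. finite Q \<and> card Q \<le> N \<and> Q \<subseteq> P \<and> (\<forall>q\<in>Q. \<exists>(c,r)\<in>F. dist q c < \<delta> \<and> dist q c < r) \<longrightarrow>
             (\<exists>T'. T' \<subseteq> T \<and> Adm (Suc n) T' \<and> (\<exists>\<rho>>0. \<forall>q\<in>Q. Ok (Suc n) q \<rho> T'))"
  and Hfin: "\<And>T c r x t. (\<And>n. Adm n (T n)) \<Longrightarrow> (\<And>n. T (Suc n) \<subseteq> T n) \<Longrightarrow>
       (\<And>n. c n \<in> P \<and> r n > 0 \<and> Ok n (c n) (r n) (T n)) \<Longrightarrow> c \<longlonglongrightarrow> x \<Longrightarrow> x \<in> P \<Longrightarrow>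
       (\<And>n. dist x (c n) \<le> r n) \<Longrightarrow> (\<And>n. t \<in> T n) \<Longrightarrow> x + t \<in> B"
  shows "\<exists>t f. inj (f :: (nat \<Rightarrow> bool) \<Rightarrow> real) \<and> (\<forall>b. f b \<in> P \<and> f b + t \<in> B)"
proof -
  have st: "\<exists>Y. sext n X Y \<and> sinv P Adm Ok (Suc n) Y" if "sinv P Adm Ok n X" for n X
    apply (rule scheme_step[of P Ok Adm n X])
    subgoal by (rule Plim)
    subgoal by (rule Hmono)
    subgoal by (rule Hstep)
    subgoal by (rule that)
    done
  define nxt where "nxt = (\<lambda>n X. SOME Y. sext n X Y \<and> sinv P Adm Ok (Suc n) Y)"
  have nxt: "sext n X (nxt n X) \<and> sinv P Adm Ok (Suc n) (nxt n X)" if "sinv P Adm Ok n X" for n X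
    unfolding nxt_def by (rule someI_ex[OF st[OF that]])
  define seq where "seq = rec_nat (T0, \<lambda>_. (c0, r0)) nxt"
  have seqS: "seq (Suc n) = nxt n (seq n)" for n unfolding seq_def by simp
  have inv: "sinv P Adm Ok n (seq n)" for n
  proof (induction n)
    case 0 show ?case unfolding seq_def sinv_def using H0 c0 by simp
  next
    case (Suc n) then show ?case using nxt seqS by simp
  qed
  have ext: "sext n (seq n) (seq (Suc n))" for n using nxt inv seqS by simp
  define Tt where "Tt = (\<lambda>n. fst (seq n))"
  define pre where "pre = (\<lambda>(b::nat \<Rightarrow> bool) n. map b [0..<n])"
  have preS: "pre b (Suc n) = pre b n @ [b n]" for b n unfolding pre_def by simp
  have lpre: "length (pre b n) = n" for b n unfolding pre_def by simp
  define cen where "cen = (\<lambda>b n. fst (snd (seq n) (pre b n)))"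
  define rad where "rad = (\<lambda>b n. snd (snd (seq n) (pre b n)))"
  have Tdec: "Tt (Suc n) \<subseteq> Tt n" for n using ext[of n] unfolding sext_def Tt_def by simp
  have Adm: "Adm n (Tt n)" for n using inv[of n] unfolding sinv_def Tt_def by simp
  have cok: "cen b n \<in> P \<and> rad b n > 0 \<and> Ok n (cen b n) (rad b n) (Tt n)" for b n
    using inv[of n] lpre[of b n] unfolding sinv_def Tt_def cen_def rad_def by simp
  have nest: "cball (cen b (Suc n)) (rad b (Suc n)) \<subseteq> cball (cen b n) (rad b n)" for b n
    using ext[of n] lpre[of b n] unfolding sext_def cen_def rad_def preS by simp
  have radle: "rad b (Suc n) \<le> inverse (real (Suc n))" for b n
    using ext[of n] lpre[of b n] unfolding sext_def cen_def rad_def preS by simp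
  have disj: "cball (cen b (Suc n)) (rad b (Suc n)) \<inter> cball (cen b' (Suc n)) (rad b' (Suc n)) = {}"
    if "pre b n = pre b' n" "b n \<noteq> b' n" for b b' n
  proof -
    let ?s = "pre b n"
    have L: "length ?s = n" by (rule lpre)
    have D: "cball (fst (snd (seq (Suc n)) (?s@[True]))) (snd (snd (seq (Suc n)) (?s@[True]))) \<inter>
             cball (fst (snd (seq (Suc n)) (?s@[False]))) (snd (snd (seq (Suc n)) (?s@[False]))) = {}"
      using ext[of n] L unfolding sext_def by blast
    have cb: "cen b (Suc n) = fst (snd (seq (Suc n)) (?s@[b n]))" "rad b (Suc n) = snd (snd (seq (Suc n)) (?s@[b n]))"
      "cen b' (Suc n) = fst (snd (seq (Suc n)) (?s@[b' n]))" "rad b' (Suc n) = snd (snd (seq (Suc n)) (?s@[b' n]))"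
      unfolding cen_def rad_def preS that(1) by simp_all
    show ?thesis
    proof (cases "b n")
      case True
      then have "\<not> b' n" using that(2) by simp
      then show ?thesis using D True unfolding cb by simp
    next
      case False
      then have "b' n" using that(2) by simp
      then show ?thesis using D False unfolding cb by (simp add: Int_commute)
    qed
  qed
  have nest2: "cball (cen b (n + k)) (rad b (n + k)) \<subseteq> cball (cen b n) (rad b n)" for b n k
  proof (induction k)
    case (Suc k) then show ?case using nest[of b "n + k"] by (metis add_Suc_right order_trans)
  qed simp
  have cin: "cen b m \<in> cball (cen b n) (rad b n)" if nm: "n \<le> m" for b n m
  proof -
    obtain k where mk: "m = n + k" using le_Suc_ex[OF nm] by (elim exE)
    have r: "0 < rad b (n + k)" using cok[of b "n + k"] by blast
    have "cen b (n + k) \<in> cball (cen b (n + k)) (rad b (n + k))" using r by simp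
    then have "cen b (n + k) \<in> cball (cen b n) (rad b n)" using nest2[of b n k] by (rule subsetD[rotated])
    then show ?thesis unfolding mk .
  qed
  have conv: "\<exists>x. cen b \<longlonglongrightarrow> x" for b
  proof -
    have "Cauchy (cen b)"
    proof (rule metric_CauchyI)
      fix e :: real assume "e > 0"
      then obtain M where M: "inverse (real (Suc M)) < e / 2"
        using reals_Archimedean[of "e/2"] \<open>e > 0\<close> by auto
      show "\<exists>M. \<forall>m\<ge>M. \<forall>n\<ge>M. dist (cen b m) (cen b n) < e"
      proof (intro exI allI impI)
        fix m n assume "Suc M \<le> m" "Suc M \<le> n"
        then have "dist (cen b (Suc M)) (cen b m) \<le> rad b (Suc M)" "dist (cen b (Suc M)) (cen b n) \<le> rad b (Suc M)"
          using cin by auto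
        moreover have "dist (cen b m) (cen b n) \<le> dist (cen b (Suc M)) (cen b m) + dist (cen b (Suc M)) (cen b n)"
          by (rule dist_triangle3)
        ultimately show "dist (cen b m) (cen b n) < e" using radle[of b M] M by linarith
      qed
    qed
    then show ?thesis using Cauchy_convergent_iff convergent_def by blast
  qed
  define f where "f = (\<lambda>b. lim (cen b))"
  have flim: "cen b \<longlonglongrightarrow> f b" for b using conv[of b] unfolding f_def by (metis limI)
  have fin: "f b \<in> cball (cen b n) (rad b n)" for b n
  proof (rule Lim_in_closed_set[OF closed_cball _ _ flim])
    show "\<forall>\<^sub>F x in sequentially. cen b x \<in> cball (cen b n) (rad b n)"
      using cin by (auto simp: eventually_sequentially)
  qed simp
  have fP: "f b \<in> P" for b
    by (rule Lim_in_closed_set[OF Pcl _ _ flim]) (use cok in auto)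
  have "\<Inter>(range Tt) \<noteq> {}"
  proof (rule compact_nest)
    show "compact (Tt n)" "Tt n \<noteq> {}" for n using Hcpt[OF Adm[of n]] by auto
    show "Tt n \<subseteq> Tt m" if "m \<le> n" for m n
      using Tdec that by (metis decseq_Suc_iff decseqD)
  qed
  then obtain t where t: "\<And>n. t \<in> Tt n" by blast
  have fB: "f b + t \<in> B" for b
    by (rule Hfin[of Tt "cen b" "rad b"]) (use Adm Tdec cok flim fP fin t in \<open>auto simp: dist_commute\<close>)
  have "inj f"
  proof (rule injI)
    fix b b' assume eq: "f b = f b'"
    show "b = b'"
    proof (rule ccontr)
      assume "b \<noteq> b'"
      then have ex: "\<exists>k. b k \<noteq> b' k" by (auto simp: fun_eq_iff)
      define k where "k = (LEAST k. b k \<noteq> b' k)"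
      have k: "b k \<noteq> b' k" using LeastI_ex[OF ex] k_def by simp
      have "b j = b' j" if "j < k" for j using not_less_Least[of j "\<lambda>k. b k \<noteq> b' k"] that k_def by auto
      then have "pre b k = pre b' k" unfolding pre_def by simp
      from disj[OF this k] fin[of b "Suc k"] fin[of b' "Suc k"] eq show False by auto
    qed
  qed
  then show ?thesis using fP fB by blast
qed



lemma transl_small:
  fixes T :: "real set"
  assumes T: "compact T" and e: "e > 0"
  shows "\<exists>\<eta>>0. \<forall>h. \<bar>h\<bar> < \<eta> \<longrightarrow> measure lebesgue (T - (\<lambda>x. x + h) ` T) < e"
proof -
  have Tl: "T \<in> lmeasurable" using T by (rule lmeasurable_compact)
  then have "T \<in> sets lebesgue" by (simp add: fmeasurable_def)
  then obtain V where V: "open V" "T \<subseteq> V" "(V - T) \<in> lmeasurable" "emeasure lebesgue (V - T) < ennreal e"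
    using sets_lebesgue_outer_open[OF _ e] by blast
  have mV: "measure lebesgue (V - T) < e"
    using V(3,4) e by (simp add: emeasure_eq_measure2 ennreal_less_iff)
  obtain \<eta> where \<eta>: "\<eta> > 0" "(\<Union>x\<in>T. ball x \<eta>) \<subseteq> V"
    using compact_subset_open_imp_ball_epsilon_subset[OF T V(1,2)] by blast
  show ?thesis
  proof (intro exI conjI allI impI)
    show "\<eta> > 0" by (rule \<eta>(1))
    fix h :: real assume h: "\<bar>h\<bar> < \<eta>"
    define Th where "Th = (\<lambda>x. x + h) ` T"
    have Th_eq: "Th = (+) h ` T" unfolding Th_def by (auto simp: add.commute)
    have Thc: "compact Th" unfolding Th_eq using T by (rule compact_translation)
    then have Thl: "Th \<in> lmeasurable" by (rule lmeasurable_compact)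
    have mTh: "measure lebesgue Th = measure lebesgue T" unfolding Th_eq by (rule measure_translation)
    have ThV: "Th \<subseteq> V"
    proof
      fix y assume "y \<in> Th"
      then obtain x where x: "x \<in> T" "y = x + h" unfolding Th_def by auto
      then have "y \<in> ball x \<eta>" using h by (simp add: dist_real_def)
      then show "y \<in> V" using \<eta>(2) x(1) by blast
    qed
    have ThTs: "Th - T \<in> sets lebesgue" using Thl Tl by (intro sets.Diff) (auto simp: fmeasurable_def)
    have TT: "T \<inter> Th \<in> lmeasurable" using Tl Thl by (simp add: fmeasurable.Int)
    have "measure lebesgue (T - Th) = measure lebesgue (T - (T \<inter> Th))" by (simp add: Diff_Int)
    also have "\<dots> = measure lebesgue T - measure lebesgue (T \<inter> Th)"
      using Tl TT by (intro measure_Diff) (auto simp: fmeasurable_def)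
    also have "\<dots> = measure lebesgue Th - measure lebesgue (Th \<inter> T)" using mTh by (simp add: Int_commute)
    also have "\<dots> = measure lebesgue (Th - (Th \<inter> T))"
      using Thl TT by (intro measure_Diff[symmetric]) (auto simp: fmeasurable_def Int_commute)
    also have "\<dots> = measure lebesgue (Th - T)" by (simp add: Diff_Int)
    also have "\<dots> \<le> measure lebesgue (V - T)"
      using ThV V(3) ThTs by (intro measure_mono_fmeasurable) auto
    finally show "measure lebesgue (T - (\<lambda>x. x + h) ` T) < e" using mV unfolding Th_def by linarith
  qed
qed

lemma inj_to_eqpoll:
  fixes P B :: "real set"
  assumes "inj (f :: (nat \<Rightarrow> bool) \<Rightarrow> real)" "\<And>b. f b \<in> P \<and> f b + t \<in> B"
  shows "((\<lambda>x. x + t) ` P) \<inter> B \<approx> (UNIV :: real set)"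
proof (rule lepoll_antisym)
  show "((\<lambda>x. x + t) ` P) \<inter> B \<lesssim> (UNIV :: real set)" by (rule subset_imp_lepoll) simp
  define g where "g = (\<lambda>S::nat set. f (\<lambda>k. k \<in> S) + t)"
  have "inj g"
  proof (rule injI)
    fix S S' assume "g S = g S'"
    then have "(\<lambda>k. k \<in> S) = (\<lambda>k. k \<in> S')" using assms(1) unfolding g_def by (simp add: inj_eq)
    then show "S = S'" by (simp add: fun_eq_iff set_eq_iff)
  qed
  moreover have "g ` UNIV \<subseteq> ((\<lambda>x. x + t) ` P) \<inter> B" using assms(2) unfolding g_def by auto
  ultimately have "(UNIV :: nat set set) \<lesssim> ((\<lambda>x. x + t) ` P) \<inter> B"
    unfolding lepoll_def by (meson inj_on_subset subset_UNIV)
  then show "(UNIV :: real set) \<lesssim> ((\<lambda>x. x + t) ` P) \<inter> B"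
    using nat_sets_eqpoll_reals by (meson eqpoll_sym eqpoll_imp_lepoll lepoll_trans)
qed

lemma pos_compact_subset:
  fixes B :: "real set"
  assumes "B \<in> sets lebesgue" "B \<notin> null_sets lebesgue"
  shows "\<exists>K. compact K \<and> K \<subseteq> B \<and> measure lebesgue K > 0"
proof -
  have "\<exists>n::nat. B \<inter> cball 0 (real n) \<notin> null_sets lebesgue"
  proof (rule ccontr)
    assume "\<not> ?thesis"
    then have "(\<Union>n. B \<inter> cball 0 (real n)) \<in> null_sets lebesgue" by blast
    moreover have "(\<Union>n. B \<inter> cball 0 (real n)) = B"
    proof (intro equalityI subsetI)
      fix x assume "x \<in> B"
      obtain n where "norm x \<le> real n" using real_arch_simple by blast
      then show "x \<in> (\<Union>n. B \<inter> cball 0 (real n))" using \<open>x \<in> B\<close> by auto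
    qed auto
    ultimately show False using assms(2) by simp
  qed
  then obtain n where n: "B \<inter> cball 0 (real n) \<notin> null_sets lebesgue" by blast
  define B' where "B' = B \<inter> cball 0 (real n)"
  have B'l: "B' \<in> lmeasurable" unfolding B'_def using assms(1)
    by (subst Int_commute, intro fmeasurable_Int_fmeasurable) (auto simp: lmeasurable_cball)
  have "measure lebesgue B' > 0"
  proof -
    have "measure lebesgue B' \<noteq> 0" using n B'l unfolding B'_def
      by (simp add: fmeasurable_def null_sets_def emeasure_eq_measure2[OF B'l[unfolded B'_def]])
    then show ?thesis by (simp add: order_le_neq_trans[OF measure_nonneg] )
  qed
  then obtain C where C: "closed C" "C \<subseteq> B'" "B' - C \<in> lmeasurable" "emeasure lebesgue (B' - C) < ennreal (measure lebesgue B')"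
    using sets_lebesgue_inner_closed[of B' "measure lebesgue B'"] B'l by (auto simp: fmeasurable_def)
  have mC: "measure lebesgue (B' - C) < measure lebesgue B'"
    using C(3,4) by (simp add: emeasure_eq_measure2 ennreal_less_iff)
  have "compact C" using C(1,2) unfolding B'_def
    by (meson bounded_cball bounded_subset compact_eq_bounded_closed inf.boundedE)
  moreover have "measure lebesgue (B' - C) = measure lebesgue B' - measure lebesgue C"
    using B'l C(1,2) by (intro measure_Diff) (auto simp: fmeasurable_def)
  ultimately show ?thesis using C(2) mC unfolding B'_def by auto
qed

lemma null_case:
  fixes P B :: "real set"
  assumes Pcl: "closed P" and Plim: "\<And>x. x \<in> P \<Longrightarrow> x islimpt P" and c0: "c0 \<in> P"
    and B: "B \<in> sets lebesgue" "B \<notin> null_sets lebesgue"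
  shows "\<exists>t f. inj (f::(nat\<Rightarrow>bool)\<Rightarrow>real) \<and> (\<forall>b. f b \<in> P \<and> f b + t \<in> B)"
proof -
  obtain K where K: "compact K" "K \<subseteq> B" "measure lebesgue K > 0"
    using pos_compact_subset[OF B] by blast
  define Adm where "Adm = (\<lambda>(n::nat) (T::real set). compact T \<and> measure lebesgue T > 0)"
  define Ok where "Ok = (\<lambda>(n::nat) (c::real) (r::real) (T::real set). \<forall>t\<in>T. c + t \<in> K)"
  define T0 where "T0 = (\<lambda>x. x - c0) ` K"
  have H0: "(1::real) > 0" "Adm 0 T0" "Ok 0 c0 1 T0"
    unfolding Adm_def Ok_def T0_def using K
    by (auto simp: compact_translation_subtract measure_translation_subtract)
  have Hcpt: "compact T \<and> T \<noteq> {}" if "Adm n T" for n T using that unfolding Adm_def by auto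
  have Hmono: "Ok n c r' T" if "Ok n c r T" for n c r r' T using that unfolding Ok_def by simp
  have Hstep: "\<exists>\<delta>>0. \<forall>Q. finite Q \<and> card Q \<le> N \<and> Q \<subseteq> P \<and> (\<forall>q\<in>Q. \<exists>(c,r)\<in>F. dist q c < \<delta> \<and> dist q c < r) \<longrightarrow>
             (\<exists>T'. T' \<subseteq> T \<and> Adm (Suc n) T' \<and> (\<exists>\<rho>>0. \<forall>q\<in>Q. Ok (Suc n) q \<rho> T'))"
    if AT: "Adm n T" and FF: "finite F" and Fok: "\<And>c r. (c,r) \<in> F \<Longrightarrow> c \<in> P \<and> r > 0 \<and> Ok n c r T" for n T F N
  proof -
    have Tc: "compact T" and mT: "measure lebesgue T > 0" using AT unfolding Adm_def by auto
    have Tl: "T \<in> lmeasurable" using Tc by (rule lmeasurable_compact)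
    define \<epsilon> where "\<epsilon> = measure lebesgue T / (real N + 1)"
    have \<epsilon>: "\<epsilon> > 0" unfolding \<epsilon>_def using mT by simp
    obtain \<eta> where \<eta>: "\<eta> > 0" "\<And>h. \<bar>h\<bar> < \<eta> \<Longrightarrow> measure lebesgue (T - (\<lambda>x. x + h) ` T) < \<epsilon>"
      using transl_small[OF Tc \<epsilon>] by blast
    show ?thesis
    proof (rule exI[of _ \<eta>], intro conjI allI impI)
      show "\<eta> > 0" by (rule \<eta>(1))
      fix Q assume HQ: "finite Q \<and> card Q \<le> N \<and> Q \<subseteq> P \<and> (\<forall>q\<in>Q. \<exists>(c,r)\<in>F. dist q c < \<eta> \<and> dist q c < r)"
      then have fQ: "finite Q" and cQ: "card Q \<le> N" and nQ: "\<And>q. q \<in> Q \<Longrightarrow> \<exists>(c,r)\<in>F. dist q c < \<eta> \<and> dist q c < r"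
        by auto
      define D where "D = (\<lambda>q. T - (\<lambda>x. x - q) ` K)"
      define T' where "T' = T - (\<Union>q\<in>Q. D q)"
      have KqC: "compact ((\<lambda>x. x - q) ` K)" for q using K(1) by (rule compact_translation_subtract)
      have Kql: "(\<lambda>x. x - q) ` K \<in> lmeasurable" for q using KqC[of q] by (rule lmeasurable_compact)
      have Dl: "D q \<in> lmeasurable" for q unfolding D_def
        using Tl Kql[of q] by (intro fmeasurable_Diff) auto
      have Dsmall: "measure lebesgue (D q) < \<epsilon>" if qQ: "q \<in> Q" for q
      proof -
        obtain c r where cr: "(c,r) \<in> F" "dist q c < \<eta>" using nQ[OF qQ] by blast
        have okc: "\<forall>t\<in>T. c + t \<in> K" using Fok[OF cr(1)] unfolding Ok_def by blast
        have sub: "D q \<subseteq> T - (\<lambda>x. x + (c - q)) ` T"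
        proof
          fix t assume t: "t \<in> D q"
          then have tT: "t \<in> T" and tK: "t \<notin> (\<lambda>x. x - q) ` K" unfolding D_def by auto
          show "t \<in> T - (\<lambda>x. x + (c - q)) ` T"
          proof (rule ccontr)
            assume "t \<notin> T - (\<lambda>x. x + (c - q)) ` T"
            then obtain x where x: "x \<in> T" "t = x + (c - q)" using tT by auto
            then have "c + x \<in> K" using okc by blast
            moreover have "t = (c + x) - q" using x by simp
            ultimately show False using tK by blast
          qed
        qed
        have feq: "(\<lambda>x. x + (c - q)) = (\<lambda>x. x - (q - c))" by (simp add: fun_eq_iff)
        have Thl: "(\<lambda>x. x + (c - q)) ` T \<in> lmeasurable"
          unfolding feq using Tc by (intro lmeasurable_compact compact_translation_subtract)
        have "measure lebesgue (D q) \<le> measure lebesgue (T - (\<lambda>x. x + (c - q)) ` T)"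
          using sub Dl[of q] Tl Thl by (intro measure_mono_fmeasurable) (auto intro: fmeasurable_Diff)
        also have "\<dots> < \<epsilon>" using \<eta>(2)[of "c - q"] cr(2) by (simp add: dist_real_def abs_minus_commute)
        finally show ?thesis .
      qed
      have U: "(\<Union>q\<in>Q. D q) \<subseteq> T" unfolding D_def by auto
      have Ul: "(\<Union>q\<in>Q. D q) \<in> lmeasurable" using fQ Dl by (intro fmeasurable.finite_UN) auto
      have "measure lebesgue (\<Union>q\<in>Q. D q) \<le> (\<Sum>q\<in>Q. measure lebesgue (D q))"
        using fQ Dl by (intro measure_UNION_le) auto
      also have "\<dots> \<le> real (card Q) * \<epsilon>" using Dsmall by (intro sum_bounded_above) (simp add: less_imp_le)
      also have "\<dots> \<le> real N * \<epsilon>" using cQ \<epsilon> by (intro mult_right_mono) auto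
      also have "\<dots> < measure lebesgue T"
      proof -
        have "real N * \<epsilon> = measure lebesgue T * (real N / (real N + 1))" unfolding \<epsilon>_def by (simp add: field_simps)
        also have "\<dots> < measure lebesgue T * 1" using mT by (intro mult_strict_left_mono) auto
        finally show ?thesis by simp
      qed
      finally have mU: "measure lebesgue (\<Union>q\<in>Q. D q) < measure lebesgue T" .
      have mT': "measure lebesgue T' = measure lebesgue T - measure lebesgue (\<Union>q\<in>Q. D q)"
        unfolding T'_def using Tl Ul U by (intro measure_Diff) (auto simp: fmeasurable_def)
      have T'eq: "T' = T \<inter> (\<Inter>q\<in>Q. (\<lambda>x. x - q) ` K)" unfolding T'_def D_def by auto
      have "compact T'" unfolding T'eq using Tc KqC
        by (intro compact_Int_closed closed_INT) (auto intro: compact_imp_closed)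
      show "\<exists>T'. T' \<subseteq> T \<and> Adm (Suc n) T' \<and> (\<exists>\<rho>>0. \<forall>q\<in>Q. Ok (Suc n) q \<rho> T')"
      proof (intro exI conjI)
        show "T' \<subseteq> T" unfolding T'_def by auto
        show "Adm (Suc n) T'" unfolding Adm_def using \<open>compact T'\<close> mT' mU by simp
        show "(1::real) > 0" by simp
        show "\<forall>q\<in>Q. Ok (Suc n) q 1 T'"
        proof (intro ballI)
          fix q assume "q \<in> Q"
          then show "Ok (Suc n) q 1 T'" unfolding Ok_def T'eq by auto
        qed
      qed
    qed
  qed
  have Hfin: "x + t \<in> B" if "\<And>n. Adm n (T n)" "\<And>n. T (Suc n) \<subseteq> T n"
       "\<And>n. c n \<in> P \<and> r n > 0 \<and> Ok n (c n) (r n) (T n)" "c \<longlonglongrightarrow> x" "x \<in> P"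
       "\<And>n. dist x (c n) \<le> r n" "\<And>n. t \<in> T n" for T c r x t
  proof -
    have "(\<lambda>n. c n + t) \<longlonglongrightarrow> x + t" using that(4) by (intro tendsto_add) auto
    moreover have "c n + t \<in> K" for n using that(3)[of n] that(7)[of n] unfolding Ok_def by blast
    ultimately have "x + t \<in> K"
      using compact_imp_closed[OF K(1)] by (intro Lim_in_closed_set[of K "\<lambda>n. c n + t"]) auto
    then show ?thesis using K(2) by blast
  qed
  show ?thesis
    apply (rule scheme[of P c0 1 Adm T0 Ok B])
    subgoal by (rule Pcl)
    subgoal by (rule Plim)
    subgoal by (rule c0)
    subgoal by (rule H0(1))
    subgoal by (rule H0(2))
    subgoal by (rule H0(3))
    subgoal by (rule Hcpt)
    subgoal by (rule Hmono)
    subgoal by (rule Hstep)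
    subgoal by (rule Hfin)
    done
qed



lemma meager_sub: "A \<subseteq> M \<Longrightarrow> M \<in> meager_sets \<Longrightarrow> A \<in> meager_sets"
  unfolding meager_sets_def by blast

lemma meager_nd: "nowhere_dense S \<Longrightarrow> S \<in> meager_sets"
  unfolding meager_sets_def by (rule CollectI, rule exI[of _ "\<lambda>_. S"]) auto

lemma meager_UN:
  assumes "\<And>n::nat. M n \<in> meager_sets"
  shows "(\<Union>n. M n) \<in> meager_sets"
proof -
  have "\<forall>n. \<exists>F::nat \<Rightarrow> real set. (\<forall>k. nowhere_dense (F k)) \<and> M n \<subseteq> (\<Union>k. F k)"
    using assms unfolding meager_sets_def by blast
  then have ex: "\<exists>F::nat \<Rightarrow> real set. (\<forall>k. nowhere_dense (F k)) \<and> M n \<subseteq> (\<Union>k. F k)" for n by blast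
  define G where "G = (\<lambda>n. SOME F::nat \<Rightarrow> real set. (\<forall>k. nowhere_dense (F k)) \<and> M n \<subseteq> (\<Union>k. F k))"
  have G0: "(\<forall>k. nowhere_dense (G n k)) \<and> M n \<subseteq> (\<Union>k. G n k)" for n
    unfolding G_def by (rule someI_ex[OF ex])
  have G: "\<And>n k. nowhere_dense (G n k)" "\<And>n. M n \<subseteq> (\<Union>k. G n k)" using G0 by auto
  define H where "H = (\<lambda>m. G (fst (prod_decode m)) (snd (prod_decode m)))"
  have "\<forall>m. nowhere_dense (H m)" unfolding H_def using G(1) by simp
  moreover have "(\<Union>n. M n) \<subseteq> (\<Union>m. H m)"
  proof
    fix x assume "x \<in> (\<Union>n. M n)"
    then obtain n k where "x \<in> G n k" using G(2) by blast
    then have "x \<in> H (prod_encode (n, k))" unfolding H_def by simp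
    then show "x \<in> (\<Union>m. H m)" by blast
  qed
  ultimately show ?thesis unfolding meager_sets_def by blast
qed

lemma meager_Un:
  assumes "A \<in> meager_sets" "B \<in> meager_sets"
  shows "A \<union> B \<in> meager_sets"
proof -
  have "(\<Union>n::nat. if n = 0 then A else B) \<in> meager_sets" using assms by (intro meager_UN) simp
  moreover have "(\<Union>n::nat. if n = 0 then A else B) = A \<union> B"
  proof (intro equalityI subsetI)
    fix x assume "x \<in> A \<union> B"
    then show "x \<in> (\<Union>n::nat. if n = 0 then A else B)"
    proof
      assume "x \<in> A" then show ?thesis by (intro UN_I[of 0]) auto
    next
      assume "x \<in> B" then show ?thesis by (intro UN_I[of 1]) auto
    qed
  qed (auto split: if_splits)
  ultimately show ?thesis by simp
qed

lemma closed_boundary_nd: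
  fixes F :: "real set"
  assumes "closed F"
  shows "nowhere_dense (F - interior F)"
proof -
  have cl: "closed (F - interior F)" using assms by (intro closed_Diff) auto
  have "interior (F - interior F) \<subseteq> interior F" by (intro interior_mono) auto
  moreover have "interior (F - interior F) \<subseteq> F - interior F" by (rule interior_subset)
  ultimately have "interior (F - interior F) = {}" by blast
  then show ?thesis unfolding nowhere_dense_def using cl by (simp add: closure_closed)
qed

definition bp :: "real set \<Rightarrow> bool" where
  "bp S \<longleftrightarrow> (\<exists>V. open V \<and> (S - V) \<union> (V - S) \<in> meager_sets)"

lemma bp_open: "open S \<Longrightarrow> bp S"
  unfolding bp_def by (rule exI[of _ S]) (auto intro: meager_nd simp: nowhere_dense_def)

lemma bp_compl:
  assumes "bp S" shows "bp (UNIV - S)"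
proof -
  obtain V where V: "open V" "(S - V) \<union> (V - S) \<in> meager_sets" using assms unfolding bp_def by blast
  define V' where "V' = interior (UNIV - V)"
  have "((UNIV - S) - V') \<union> (V' - (UNIV - S)) \<subseteq> ((S - V) \<union> (V - S)) \<union> ((UNIV - V) - interior (UNIV - V))"
    unfolding V'_def using interior_subset[of "UNIV - V"] by blast
  moreover have "((S - V) \<union> (V - S)) \<union> ((UNIV - V) - interior (UNIV - V)) \<in> meager_sets"
    using V by (intro meager_Un[OF V(2)] meager_nd closed_boundary_nd) auto
  ultimately show ?thesis unfolding bp_def V'_def by (meson open_interior meager_sub)
qed

lemma bp_UN:
  assumes "\<And>n::nat. bp (A n)" shows "bp (\<Union>n. A n)"
proof -
  have "\<forall>n. \<exists>V. open V \<and> (A n - V) \<union> (V - A n) \<in> meager_sets" using assms unfolding bp_def by blast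
  then obtain V where V: "\<And>n. open (V n)" "\<And>n. (A n - V n) \<union> (V n - A n) \<in> meager_sets" by metis
  have "((\<Union>n. A n) - (\<Union>n. V n)) \<union> ((\<Union>n. V n) - (\<Union>n. A n)) \<subseteq> (\<Union>n. (A n - V n) \<union> (V n - A n))" by blast
  moreover have "(\<Union>n. (A n - V n) \<union> (V n - A n)) \<in> meager_sets" using V(2) by (rule meager_UN)
  ultimately show ?thesis unfolding bp_def using V(1) by (meson open_UN meager_sub)
qed

lemma borel_bp:
  assumes "B \<in> sets borel" shows "bp B"
proof -
  have "B \<in> sigma_sets UNIV {S. open S}" using assms sets_borel by blast
  then show ?thesis
  proof (induction rule: sigma_sets.induct)
    case (Basic a) then show ?case by (auto intro: bp_open)
  next
    case Empty then show ?case by (auto intro: bp_open)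
  next
    case (Compl a) then show ?case using bp_compl by blast
  next
    case (Union a) then have "\<And>i. bp (a i)" by blast
    then show ?case by (rule bp_UN)
  qed
qed

lemma shrink:
  fixes G V :: "real set" and Q :: "real set"
  assumes dense: "\<And>W. open W \<Longrightarrow> W \<noteq> {} \<Longrightarrow> W \<subseteq> V \<Longrightarrow> W \<inter> G \<noteq> {}" and oG: "open G"
    and fQ: "finite Q" and \<rho>: "\<rho> > 0" and QV: "\<forall>q\<in>Q. \<forall>t\<in>cball \<tau> \<rho>. q + t \<in> V"
  shows "\<exists>\<tau>' \<rho>'. \<rho>' > 0 \<and> cball \<tau>' \<rho>' \<subseteq> cball \<tau> \<rho> \<and> (\<forall>q\<in>Q. \<forall>t. dist t \<tau>' \<le> 2 * \<rho>' \<longrightarrow> q + t \<in> G)"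
  using fQ QV
proof (induction Q rule: finite_induct)
  case empty
  show ?case by (rule exI[of _ \<tau>], rule exI[of _ \<rho>]) (use \<rho> in auto)
next
  case (insert a Q)
  then obtain \<tau>1 \<rho>1 where IH: "\<rho>1 > 0" "cball \<tau>1 \<rho>1 \<subseteq> cball \<tau> \<rho>"
      "\<forall>q\<in>Q. \<forall>t. dist t \<tau>1 \<le> 2 * \<rho>1 \<longrightarrow> q + t \<in> G" by auto
  have aV: "\<forall>t\<in>cball \<tau> \<rho>. a + t \<in> V" using insert.prems by auto
  have "ball (a + \<tau>1) \<rho>1 \<subseteq> V"
  proof
    fix z assume "z \<in> ball (a + \<tau>1) \<rho>1"
    then have "z - a \<in> cball \<tau>1 \<rho>1" by (simp add: dist_real_def)
    then have "z - a \<in> cball \<tau> \<rho>" using IH(2) by blast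
    then have "a + (z - a) \<in> V" using aV by blast
    then show "z \<in> V" by simp
  qed
  then have "ball (a + \<tau>1) \<rho>1 \<inter> G \<noteq> {}" using IH(1) by (intro dense) auto
  then obtain y where y: "y \<in> ball (a + \<tau>1) \<rho>1" "y \<in> G" by blast
  obtain e where e: "e > 0" "ball y e \<subseteq> G" using oG y(2) open_contains_ball by blast
  define d where "d = dist y (a + \<tau>1)"
  have d: "d < \<rho>1" "d \<ge> 0" using y(1) unfolding d_def by (auto simp: dist_commute)
  define \<tau>2 where "\<tau>2 = y - a"
  define \<rho>2 where "\<rho>2 = min e (\<rho>1 - d) / 3"
  have \<rho>2: "\<rho>2 > 0" "3 * \<rho>2 \<le> e" "3 * \<rho>2 \<le> \<rho>1 - d" unfolding \<rho>2_def using e d by auto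
  have d2: "dist \<tau>2 \<tau>1 = d" unfolding \<tau>2_def d_def by (simp add: dist_real_def abs_minus_commute algebra_simps)
  show ?case
  proof (intro exI conjI)
    show "\<rho>2 > 0" by (rule \<rho>2(1))
    have "cball \<tau>2 \<rho>2 \<subseteq> cball \<tau>1 \<rho>1"
    proof
      fix t assume "t \<in> cball \<tau>2 \<rho>2"
      then have "dist \<tau>2 t \<le> \<rho>2" by simp
      moreover have "dist \<tau>1 t \<le> dist \<tau>1 \<tau>2 + dist \<tau>2 t" by (rule dist_triangle)
      ultimately show "t \<in> cball \<tau>1 \<rho>1" using d2 \<rho>2 by (simp add: dist_commute)
    qed
    then show "cball \<tau>2 \<rho>2 \<subseteq> cball \<tau> \<rho>" using IH(2) by blast
    show "\<forall>q\<in>insert a Q. \<forall>t. dist t \<tau>2 \<le> 2 * \<rho>2 \<longrightarrow> q + t \<in> G"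
    proof (intro ballI allI impI)
      fix q t assume q: "q \<in> insert a Q" and t: "dist t \<tau>2 \<le> 2 * \<rho>2"
      show "q + t \<in> G"
      proof (cases "q = a")
        case True
        have "dist y (q + t) = dist t \<tau>2" unfolding True \<tau>2_def by (simp add: dist_real_def abs_minus_commute algebra_simps)
        then have "q + t \<in> ball y e" using t \<rho>2 by simp
        then show ?thesis using e(2) by blast
      next
        case False
        then have "q \<in> Q" using q by simp
        moreover have "dist t \<tau>1 \<le> dist t \<tau>2 + dist \<tau>2 \<tau>1" by (rule dist_triangle)
        then have "dist t \<tau>1 \<le> 2 * \<rho>1" using t d2 \<rho>2 d by linarith
        ultimately show ?thesis using IH(3) by blast
      qed
    qed
  qed
qed

lemma meager_case:
  fixes P B :: "real set"
  assumes Pcl: "closed P" and Plim: "\<And>x. x \<in> P \<Longrightarrow> x islimpt P" and c0: "c0 \<in> P"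
    and B: "B \<in> sets borel" "B \<notin> meager_sets"
  shows "\<exists>t f. inj (f::(nat\<Rightarrow>bool)\<Rightarrow>real) \<and> (\<forall>b. f b \<in> P \<and> f b + t \<in> B)"
proof -
  obtain V where V: "open V" "(B - V) \<union> (V - B) \<in> meager_sets" using borel_bp[OF B(1)] unfolding bp_def by blast
  have "\<exists>F::nat \<Rightarrow> real set. (\<forall>n. nowhere_dense (F n)) \<and> (B - V) \<union> (V - B) \<subseteq> (\<Union>n. F n)"
    using V(2) by (simp add: meager_sets_def)
  then obtain F :: "nat \<Rightarrow> real set" where F0: "\<forall>n. nowhere_dense (F n)" and F2: "(B - V) \<union> (V - B) \<subseteq> (\<Union>n. F n)"
    by (elim exE conjE)
  have F: "\<And>k. nowhere_dense (F k)" "(B - V) \<union> (V - B) \<subseteq> (\<Union>k. F k)" using F0 F2 by auto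
  have Vne: "V \<noteq> {}"
  proof
    assume "V = {}"
    then have "B \<subseteq> (B - V) \<union> (V - B)" by blast
    then have "B \<in> meager_sets" using V(2) by (rule meager_sub)
    then show False using B(2) by simp
  qed
  define E where "E = (\<lambda>n. \<Union>k\<in>{..n}. closure (F k))"
  define G where "G = (\<lambda>n. V - E n)"
  have Ecl: "closed (E n)" for n unfolding E_def by (intro closed_UN) auto
  have Eint: "interior (E n) = {}" for n
  proof (induction n)
    case 0 then show ?case using F(1)[of 0] unfolding E_def nowhere_dense_def by simp
  next
    case (Suc n)
    have "E (Suc n) = E n \<union> closure (F (Suc n))" unfolding E_def by (auto simp: atMost_Suc)
    then show ?case using interior_closed_Un_empty_interior[OF Ecl[of n], of "closure (F (Suc n))"]
      F(1)[of "Suc n"] Suc unfolding nowhere_dense_def by simp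
  qed
  have oG: "open (G n)" for n unfolding G_def using V(1) Ecl by (intro open_Diff) auto
  have GV: "G n \<subseteq> V" for n unfolding G_def by auto
  have Gdec: "G (Suc n) \<subseteq> G n" for n unfolding G_def E_def by auto
  have dense: "W \<inter> G n \<noteq> {}" if W: "open W" "W \<noteq> {}" "W \<subseteq> V" for W n
  proof
    assume "W \<inter> G n = {}"
    then have "W \<subseteq> E n" using W(3) unfolding G_def by blast
    then have "W \<subseteq> interior (E n)" using W(1) by (rule interior_maximal)
    then show False using Eint W(2) by blast
  qed
  have GB: "x \<in> B" if "\<And>n. x \<in> G n" for x
  proof -
    have xV: "x \<in> V" using that[of 0] GV by blast
    have "x \<notin> F k" for k
    proof
      assume "x \<in> F k"
      then have "x \<in> E k" unfolding E_def using closure_subset by blast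
      then show False using that[of k] unfolding G_def by blast
    qed
    then have "x \<notin> (B - V) \<union> (V - B)" using F(2) by blast
    then show ?thesis using xV by blast
  qed
  define Adm where "Adm = (\<lambda>(n::nat) (T::real set). \<exists>\<tau> \<rho>. \<rho> > 0 \<and> T = cball \<tau> \<rho>)"
  define Ok where "Ok = (\<lambda>(n::nat) (c::real) (r::real) (T::real set). \<forall>x\<in>P. \<forall>t\<in>T. dist x c \<le> r \<longrightarrow> x + t \<in> G n)"
  obtain g where g: "g \<in> G 0" using dense[OF V(1) Vne order_refl, of 0] by blast
  obtain e where e: "e > 0" "ball g e \<subseteq> G 0" using oG g open_contains_ball by blast
  define T0 where "T0 = cball (g - c0) (e / 3)"
  have H0: "e / 3 > 0" "Adm 0 T0" "Ok 0 c0 (e / 3) T0"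
  proof -
    show "e / 3 > 0" using e by simp
    show "Adm 0 T0" unfolding Adm_def T0_def using e by (intro exI[of _ "g - c0"] exI[of _ "e / 3"]) simp
    show "Ok 0 c0 (e / 3) T0" unfolding Ok_def T0_def
    proof (intro ballI impI)
      fix x t assume x: "dist x c0 \<le> e / 3" and t: "t \<in> cball (g - c0) (e / 3)"
      have "dist g (x + t) \<le> dist x c0 + dist (g - c0) t"
        by (simp add: dist_real_def) 
      then have "x + t \<in> ball g e" using x t e by simp
      then show "x + t \<in> G 0" using e(2) by blast
    qed
  qed
  have Hcpt: "compact T \<and> T \<noteq> {}" if "Adm n T" for n T using that unfolding Adm_def by auto
  have Hmono: "Ok n c r' T" if "Ok n c r T" "r' \<le> r" for n c r r' T using that unfolding Ok_def by force
  have Hstep: "\<exists>\<delta>>0. \<forall>Q. finite Q \<and> card Q \<le> N \<and> Q \<subseteq> P \<and> (\<forall>q\<in>Q. \<exists>(c,r)\<in>F. dist q c < \<delta> \<and> dist q c < r) \<longrightarrow>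
             (\<exists>T'. T' \<subseteq> T \<and> Adm (Suc n) T' \<and> (\<exists>\<rho>>0. \<forall>q\<in>Q. Ok (Suc n) q \<rho> T'))"
    if AT: "Adm n T" and Fok: "\<And>c r. (c,r) \<in> F \<Longrightarrow> c \<in> P \<and> r > 0 \<and> Ok n c r T" for n T F N
  proof (rule exI[of _ 1], intro conjI allI impI)
    obtain \<tau> \<rho> where T: "\<rho> > 0" "T = cball \<tau> \<rho>" using AT unfolding Adm_def by blast
    fix Q assume HQ: "finite Q \<and> card Q \<le> N \<and> Q \<subseteq> P \<and> (\<forall>q\<in>Q. \<exists>(c,r)\<in>F. dist q c < 1 \<and> dist q c < r)"
    have QV: "\<forall>q\<in>Q. \<forall>t\<in>cball \<tau> \<rho>. q + t \<in> V"
    proof (intro ballI)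
      fix q t assume q: "q \<in> Q" and t: "t \<in> cball \<tau> \<rho>"
      obtain c r where cr: "(c,r) \<in> F" "dist q c < r" using HQ q by blast
      have "q \<in> P" using HQ q by blast
      then have "q + t \<in> G n" using Fok[OF cr(1)] cr(2) t T(2) unfolding Ok_def by auto
      then show "q + t \<in> V" using GV by blast
    qed
    obtain \<tau>' \<rho>' where S: "\<rho>' > 0" "cball \<tau>' \<rho>' \<subseteq> cball \<tau> \<rho>"
      "\<forall>q\<in>Q. \<forall>t. dist t \<tau>' \<le> 2 * \<rho>' \<longrightarrow> q + t \<in> G (Suc n)"
      using shrink[of V "G (Suc n)" Q \<rho> \<tau>] dense oG HQ T(1) QV by blast
    show "\<exists>T'. T' \<subseteq> T \<and> Adm (Suc n) T' \<and> (\<exists>\<rho>>0. \<forall>q\<in>Q. Ok (Suc n) q \<rho> T')"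
    proof (intro exI conjI)
      show "cball \<tau>' \<rho>' \<subseteq> T" using S(2) T(2) by simp
      show "Adm (Suc n) (cball \<tau>' \<rho>')" unfolding Adm_def using S(1) by blast
      show "\<rho>' > 0" by (rule S(1))
      show "\<forall>q\<in>Q. Ok (Suc n) q \<rho>' (cball \<tau>' \<rho>')" unfolding Ok_def
      proof (intro ballI impI)
        fix q x t assume q: "q \<in> Q" and x: "dist x q \<le> \<rho>'" and t: "t \<in> cball \<tau>' \<rho>'"
        have "dist (x - q + t) \<tau>' \<le> dist x q + dist \<tau>' t" by (simp add: dist_real_def)
        then have "dist (x - q + t) \<tau>' \<le> 2 * \<rho>'" using x t by simp
        then have "q + (x - q + t) \<in> G (Suc n)" using S(3) q by blast
        then show "x + t \<in> G (Suc n)" by simp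
      qed
    qed
  qed simp
  have Hfin: "x + t \<in> B" if "\<And>n. c n \<in> P \<and> r n > 0 \<and> Ok n (c n) (r n) (T n)" "x \<in> P"
       "\<And>n. dist x (c n) \<le> r n" "\<And>n. t \<in> T n" for T c r x t
    using that unfolding Ok_def by (intro GB) blast
  show ?thesis
    apply (rule scheme[of P c0 "e/3" Adm T0 Ok B])
    subgoal by (rule Pcl)
    subgoal by (rule Plim)
    subgoal by (rule c0)
    subgoal by (rule H0(1))
    subgoal by (rule H0(2))
    subgoal by (rule H0(3))
    subgoal by (rule Hcpt)
    subgoal by (rule Hmono)
    subgoal by (rule Hstep)
    subgoal by (rule Hfin)
    done
qed


theorem mainTheorem3:
  fixes I :: "real set set" and \<A> :: "real set set" and P :: "real set"
  assumes "I = meager_sets \<or> I = null_ideal"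
    and "\<A> \<subseteq> I"
    and "uncountable P" and "perfect_set P"
  shows "tiny_set I \<A> P \<longleftrightarrow>
           (\<forall>t::real. \<forall>A\<in>\<A>. countable (((\<lambda>x. x + t) ` P) \<inter> A))"
proof
  assume "tiny_set I \<A> P"
  then show "\<forall>t::real. \<forall>A\<in>\<A>. countable (((\<lambda>x. x + t) ` P) \<inter> A)"
    unfolding tiny_set_def by blast
next
  assume cnt: "\<forall>t::real. \<forall>A\<in>\<A>. countable (((\<lambda>x. x + t) ` P) \<inter> A)"
  have Pcl: "closed P" and Plim: "\<And>x. x \<in> P \<Longrightarrow> x islimpt P"
    using assms(4) unfolding perfect_set_def by auto
  have "P \<noteq> {}" using assms(3) by auto
  then obtain c0 where c0: "c0 \<in> P" by blast
  have big: "\<exists>t. ((\<lambda>x. x + t) ` P) \<inter> B \<approx> (UNIV :: real set)" if B: "B \<in> sets borel" "B \<notin> I" for B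
  proof -
    have "\<exists>t f. inj (f::(nat\<Rightarrow>bool)\<Rightarrow>real) \<and> (\<forall>b. f b \<in> P \<and> f b + t \<in> B)"
    proof (cases "I = meager_sets")
      case True
      then show ?thesis using meager_case[OF Pcl Plim c0 B(1)] B(2) by simp
    next
      case False
      then have I: "I = null_ideal" using assms(1) by simp
      have "B \<in> sets lebesgue" using B(1) by (metis sets_lborel sets_completionI_sets)
      then show ?thesis using null_case[OF Pcl Plim c0] B(2) I unfolding null_ideal_def by simp
    qed
    then obtain t f where "inj (f::(nat\<Rightarrow>bool)\<Rightarrow>real)" "\<And>b. f b \<in> P \<and> f b + t \<in> B" by blast
    then show ?thesis using inj_to_eqpoll by blast
  qed
  show "tiny_set I \<A> P" unfolding tiny_set_def using assms(3,4) cnt big by blast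
qed

end
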